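(* Let $G$ be a finite group and $H \leqslant G$. If $|HP|$ divides $|G|$ for every Sylow subgroup $P$ of $G$ (for every prime), then $|HK|$ divides $|G|$ for every subgroup $K \leqslant G$.
   Context: For subgroups $A,B$, $AB$ denotes the product set $\{ab : a \in A, b \in B\}$. *)

theory Defs
  imports "HOL-Algebra.Algebra"
begin

definition sylow_subgroup :: "('a, 'b) monoid_scheme \<Rightarrow> nat \<Rightarrow> 'a set \<Rightarrow> bool" where
  "sylow_subgroup G p P \<longleftrightarrow> Factorial_Ring.prime p \<and> subgroup P G \<and> card P = p ^ multiplicity p (order G)"

end

theory Submission
  imports Defs
begin


lemma (in group) card_set_mult_sub:
  assumes H: "subgroup H G" and K: "subgroup K G" and fin: "finite (carrier G)"
  shows "card (H <#> K) * card (H \<inter> K) = card H * card K"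
proof -
  have Hc: "H \<subseteq> carrier G" and Kc: "K \<subseteq> carrier G" using H K subgroup.subset by auto
  have fH: "finite H" and fK: "finite K" using Hc Kc fin finite_subset by auto
  define F where "F x = {(h,k). h \<in> H \<and> k \<in> K \<and> h \<otimes> k = x}" for x
  have HK_fin: "finite (H <#> K)" unfolding set_mult_def using fH fK by auto
  have U: "H \<times> K = (\<Union>x\<in>H <#> K. F x)"
    unfolding F_def set_mult_def by auto
  have cardF: "card (F x) = card (H \<inter> K)" if x: "x \<in> H <#> K" for x
  proof -
    obtain h0 k0 where h0: "h0 \<in> H" and k0: "k0 \<in> K" and xe: "x = h0 \<otimes> k0"
      using x unfolding set_mult_def by auto
    have h0c: "h0 \<in> carrier G" and k0c: "k0 \<in> carrier G" using h0 k0 Hc Kc by auto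
    have "bij_betw (\<lambda>t. (h0 \<otimes> t, inv t \<otimes> k0)) (H \<inter> K) (F x)"
    proof (rule bij_betwI')
      fix s t assume "s \<in> H \<inter> K" "t \<in> H \<inter> K"
      then have "s \<in> carrier G" "t \<in> carrier G" using Hc by auto
      then show "((h0 \<otimes> s, inv s \<otimes> k0) = (h0 \<otimes> t, inv t \<otimes> k0)) = (s = t)"
        using h0c by auto
    next
      fix t assume t: "t \<in> H \<inter> K"
      then have tc: "t \<in> carrier G" using Hc by auto
      have "h0 \<otimes> t \<in> H" using subgroup.m_closed[OF H h0] t by simp
      moreover have "inv t \<otimes> k0 \<in> K" using subgroup.m_closed[OF K subgroup.m_inv_closed[OF K] k0] t by simp
      moreover have "h0 \<otimes> t \<otimes> (inv t \<otimes> k0) = x"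
      proof -
        have "t \<otimes> (inv t \<otimes> k0) = k0" using tc k0c by (simp add: m_assoc[symmetric])
        moreover have "h0 \<otimes> t \<otimes> (inv t \<otimes> k0) = h0 \<otimes> (t \<otimes> (inv t \<otimes> k0))" using tc k0c h0c by (simp add: m_assoc)
        ultimately show ?thesis using xe by simp
      qed
      ultimately show "(h0 \<otimes> t, inv t \<otimes> k0) \<in> F x" unfolding F_def by auto
    next
      fix y assume "y \<in> F x"
      then obtain h k where y: "y = (h,k)" and h: "h \<in> H" and k: "k \<in> K" and e: "h \<otimes> k = x"
        unfolding F_def by auto
      have hc: "h \<in> carrier G" and kc: "k \<in> carrier G" using h k Hc Kc by auto
      define t where "t = inv h0 \<otimes> h"
      have tH: "t \<in> H" unfolding t_def using subgroup.m_closed[OF H subgroup.m_inv_closed[OF H h0] h] .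
      have t2: "t = k0 \<otimes> inv k"
      proof -
        have "h0 \<otimes> k0 = h \<otimes> k" using e xe by simp
        have "k0 \<otimes> inv k = inv h0 \<otimes> (h0 \<otimes> k0) \<otimes> inv k" using h0c k0c hc kc by (simp add: m_assoc[symmetric])
        also have "\<dots> = inv h0 \<otimes> (h \<otimes> k) \<otimes> inv k" using \<open>h0 \<otimes> k0 = h \<otimes> k\<close> by simp
        also have "\<dots> = inv h0 \<otimes> h" using h0c k0c hc kc by (simp add: m_assoc)
        finally show ?thesis unfolding t_def by simp
      qed
      have tK: "t \<in> K" unfolding t2 using subgroup.m_closed[OF K k0 subgroup.m_inv_closed[OF K k]] .
      have tc: "t \<in> carrier G" using tH Hc by auto
      have "h0 \<otimes> t = h" unfolding t_def using h0c hc by (simp add: m_assoc[symmetric])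
      moreover have "inv t \<otimes> k0 = k" unfolding t2 using k0c kc
        by (simp add: inv_mult_group m_assoc)
      ultimately show "\<exists>t\<in>H \<inter> K. y = (h0 \<otimes> t, inv t \<otimes> k0)" using tH tK y by auto
    qed
    then show ?thesis by (simp add: bij_betw_same_card)
  qed
  have "card (H \<times> K) = (\<Sum>x\<in>H <#> K. card (F x))"
    unfolding U
  proof (rule card_UN_disjoint[OF HK_fin])
    show "\<forall>i\<in>H <#> K. finite (F i)"
    proof
      fix i show "finite (F i)" using fH fK by (rule finite_subset[rotated, OF finite_cartesian_product]) (auto simp: F_def)
    qed
    show "\<forall>i\<in>H <#> K. \<forall>j\<in>H <#> K. i \<noteq> j \<longrightarrow> F i \<inter> F j = {}" unfolding F_def by auto
  qed
  also have "\<dots> = card (H <#> K) * card (H \<inter> K)" using cardF by simp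
  finally show ?thesis by (simp add: card_cartesian_product)
qed



lemma (in group) rcoset_action:
  assumes P: "subgroup P G"
  shows "group_action G (rcosets P) (\<lambda>g. \<lambda>Y\<in>(rcosets P). Y #> (inv g))"
proof -
  let ?E = "rcosets P"
  let ?phi = "\<lambda>g. \<lambda>Y\<in>(rcosets P). Y #> (inv g)"
  have Pc: "P \<subseteq> carrier G" using P subgroup.subset by auto
  have Xc: "Y \<subseteq> carrier G" if "Y \<in> ?E" for Y
    using that Pc unfolding RCOSETS_def using r_coset_subset_G by blast
  have cl: "Y #> g \<in> ?E" if Y: "Y \<in> ?E" and g: "g \<in> carrier G" for Y g
  proof -
    obtain a where a: "a \<in> carrier G" "Y = P #> a" using Y unfolding RCOSETS_def by auto
    then have "Y #> g = P #> (a \<otimes> g)" using coset_mult_assoc Pc g by simp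
    then show ?thesis using a g unfolding RCOSETS_def by auto
  qed
  have bij: "?phi g \<in> Bij ?E" if g: "g \<in> carrier G" for g
  proof -
    have "bij_betw (?phi g) ?E ?E"
    proof (rule bij_betw_byWitness[where f' = "\<lambda>Y. Y #> g"])
      show "\<forall>a\<in>?E. (?phi g a) #> g = a"
        using Xc g by (simp add: coset_mult_assoc r_coset_subset_G)
      show "\<forall>a\<in>?E. ?phi g (a #> g) = a"
        using Xc g cl by (simp add: coset_mult_assoc r_coset_subset_G)
      show "?phi g ` ?E \<subseteq> ?E" using cl g by auto
      show "(\<lambda>Y. Y #> g) ` ?E \<subseteq> ?E" using cl g by auto
    qed
    then show ?thesis unfolding Bij_def by auto
  qed
  have hom: "?phi (x \<otimes> y) = ?phi x \<otimes>\<^bsub>BijGroup ?E\<^esub> ?phi y"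
    if x: "x \<in> carrier G" and y: "y \<in> carrier G" for x y
  proof -
    have "?phi (x \<otimes> y) = compose ?E (?phi x) (?phi y)"
    proof (rule ext)
      fix Y show "?phi (x \<otimes> y) Y = compose ?E (?phi x) (?phi y) Y"
        using x y cl Xc by (auto simp: compose_def inv_mult_group coset_mult_assoc)
    qed
    then show ?thesis using bij x y by (simp add: BijGroup_def)
  qed
  show ?thesis
    unfolding group_action_def group_hom_def group_hom_axioms_def hom_def
    using bij hom is_group group_BijGroup by (auto simp: BijGroup_def)
qed

lemma (in group) sylow_extend:
  assumes fin: "finite (carrier G)" and p: "Factorial_Ring.prime p"
    and Q: "subgroup Q G" and cQ: "card Q = p ^ k"
  shows "\<exists>P. subgroup P G \<and> card P = p ^ multiplicity p (order G) \<and> Q \<subseteq> P"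
proof -
  define a where "a = multiplicity p (order G)"
  have o0: "order G \<noteq> 0" using fin unfolding order_def by (auto simp: card_eq_0_iff)
  obtain m where om: "order G = p ^ a * m" unfolding a_def using multiplicity_dvd[of p "order G"] by (auto elim!: dvdE)
  have pm: "\<not> p dvd m"
  proof
    assume "p dvd m"
    then have "p ^ Suc a dvd order G" using om by (auto simp: mult_dvd_mono)
    then have "Suc a \<le> a" unfolding a_def using o0 p by (intro multiplicity_geI) auto
    then show False by simp
  qed
  obtain P0 where P0: "subgroup P0 G" "card P0 = p ^ a" using sylow_thm[OF p is_group om fin] by blast
  define phi where "phi = (\<lambda>g. \<lambda>Y\<in>(rcosets P0). Y #> (inv g))"
  define E where "E = rcosets P0"
  define Q' where "Q' = G\<lparr>carrier := Q\<rparr>"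
  interpret A: group_action G E phi unfolding phi_def E_def by (rule rcoset_action[OF P0(1)])
  interpret QA: group_action Q' E phi unfolding Q'_def by (rule A.induced_action[OF Q])
  have cE: "card E = m"
  proof -
    have "card E * p ^ a = p ^ a * m" using lagrange[OF P0(1)] P0(2) om unfolding E_def by simp
    then show ?thesis using p by (simp add: prime_gt_0_nat)
  qed
  have fE: "finite E" unfolding E_def using fin
    by (meson finite_Pow_iff finite_subset rcosets_subset_PowG P0(1))
  have "\<exists>x\<in>E. card (orbit Q' phi x) = 1"
  proof (rule ccontr)
    assume no: "\<not> ?thesis"
    have dv: "p dvd card orb" if orb: "orb \<in> orbits Q' E phi" for orb
    proof -
      obtain x where x: "x \<in> E" and ox: "orb = orbit Q' phi x" using orb unfolding orbits_def by auto
      have "card (orbit Q' phi x) * card (stabilizer Q' phi x) = order Q'"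
        using QA.orbit_stabilizer_theorem[OF x] .
      moreover have "order Q' = p ^ k" using cQ unfolding Q'_def order_def by simp
      ultimately have e: "p ^ k = card orb * card (stabilizer Q' phi x)" using ox by simp
      have "card orb dvd p ^ k" by (rule dvdI[OF e])
      then obtain i where i: "card orb = p ^ i" using divides_primepow_nat[OF p] by auto
      have "card orb \<noteq> 1" using no x ox by auto
      then have "i \<noteq> 0" using i by auto
      then show ?thesis using i by (simp add: dvd_power)
    qed
    have "(\<Sum>orb\<in>orbits Q' E phi. \<Sum>x\<in>orb. (1::nat)) = (\<Sum>x\<in>E. 1)"
      using QA.disjoint_sum[OF fE] .
    then have "(\<Sum>orb\<in>orbits Q' E phi. card orb) = m" using cE by simp
    moreover have "p dvd (\<Sum>orb\<in>orbits Q' E phi. card orb)" using dv by (simp add: dvd_sum)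
    ultimately show False using pm by simp
  qed
  then obtain x where x: "x \<in> E" and c1: "card (orbit Q' phi x) = 1" by blast
  have xo: "x \<in> orbit Q' phi x" using QA.orbit_refl[OF x] .
  have fx: "phi q x = x" if q: "q \<in> Q" for q
  proof -
    have "phi q x \<in> orbit Q' phi x" using q unfolding orbit_def Q'_def by auto
    moreover obtain z where "orbit Q' phi x = {z}" using c1 card_1_singletonE by blast
    ultimately show ?thesis using xo by simp
  qed
  obtain g where g: "g \<in> carrier G" and xg: "x = P0 #> g" using x unfolding E_def RCOSETS_def by auto
  have P0c: "P0 \<subseteq> carrier G" using P0(1) subgroup.subset by auto
  define P where "P = (\<lambda>y. inv g \<otimes> y \<otimes> g) ` P0"
  have Peq: "P = inv g <# P0 #> g"
    unfolding P_def l_coset_def r_coset_def by auto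
  have Psub: "subgroup P G" unfolding Peq using subgroup_conjugation_is_surj1[OF g P0(1)] .
  have "inj_on (\<lambda>y. inv g \<otimes> y \<otimes> g) P0"
  proof (rule inj_onI)
    fix y z assume "y \<in> P0" "z \<in> P0" and e: "inv g \<otimes> y \<otimes> g = inv g \<otimes> z \<otimes> g"
    then have yc: "y \<in> carrier G" and zc: "z \<in> carrier G" using P0c by auto
    have "inv g \<otimes> y = inv g \<otimes> z" using e yc zc g r_cancel by simp
    then show "y = z" by (rule l_cancel[OF _ yc zc inv_closed[OF g]])
  qed
  then have cP: "card P = p ^ a" unfolding P_def using P0(2) by (simp add: card_image)
  have "Q \<subseteq> P"
  proof
    fix q assume q: "q \<in> Q"
    have qc: "q \<in> carrier G" using q Q subgroup.subset by auto
    have "x #> inv q = x" using fx[OF q] x unfolding phi_def E_def by simp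
    moreover have "g \<otimes> inv q \<in> x #> inv q"
    proof -
      have "\<one> \<otimes> g \<otimes> inv q \<in> x #> inv q"
        unfolding xg r_coset_def using subgroup.one_closed[OF P0(1)] by blast
      then show ?thesis using g by simp
    qed
    ultimately have "g \<otimes> inv q \<in> P0 #> g" using xg by simp
    then have "g \<otimes> inv q \<otimes> inv g \<in> P0"
      using subgroup.rcos_module_imp[OF P0(1) is_group g] by blast
    then have "inv (g \<otimes> inv q \<otimes> inv g) \<in> P0" by (rule subgroup.m_inv_closed[OF P0(1)])
    moreover have "inv (g \<otimes> inv q \<otimes> inv g) = g \<otimes> q \<otimes> inv g"
    proof -
      have "inv (g \<otimes> inv q \<otimes> inv g) = inv (inv g) \<otimes> inv (g \<otimes> inv q)"
        using g qc by (intro inv_mult_group) auto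
      also have "\<dots> = g \<otimes> (inv (inv q) \<otimes> inv g)" using g qc by (simp add: inv_mult_group)
      also have "\<dots> = g \<otimes> q \<otimes> inv g" using g qc by (simp add: m_assoc)
      finally show ?thesis .
    qed
    ultimately have gq: "g \<otimes> q \<otimes> inv g \<in> P0" by simp
    have e1: "g \<otimes> q \<otimes> inv g \<otimes> g = g \<otimes> q" using g qc by (simp add: m_assoc)
    have "inv g \<otimes> (g \<otimes> q \<otimes> inv g) \<otimes> g = inv g \<otimes> (g \<otimes> q \<otimes> inv g \<otimes> g)"
      using g qc by (intro m_assoc) auto
    also have "\<dots> = inv g \<otimes> (g \<otimes> q)" by (simp only: e1)
    also have "\<dots> = q" using g qc by (simp add: m_assoc[symmetric])
    finally have "q = inv g \<otimes> (g \<otimes> q \<otimes> inv g) \<otimes> g" by (rule sym)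
    then show "q \<in> P" unfolding P_def using gq by blast
  qed
  then show ?thesis using Psub cP unfolding a_def by blast
qed


lemma (in group) card_sub_dvd:
  assumes "subgroup I G" "subgroup J G" "I \<subseteq> J"
  shows "card I dvd card J"
proof -
  have "subgroup I (G\<lparr>carrier := J\<rparr>)" using subgroup_incl assms by blast
  then have "card (rcosets\<^bsub>G\<lparr>carrier := J\<rparr>\<^esub> I) * card I = order (G\<lparr>carrier := J\<rparr>)"
    using group.lagrange[OF subgroup_imp_group[OF assms(2)]] by blast
  moreover have "order (G\<lparr>carrier := J\<rparr>) = card J" unfolding order_def by simp
  ultimately have "card J = card (rcosets\<^bsub>G\<lparr>carrier := J\<rparr>\<^esub> I) * card I" by simp
  then show ?thesis by (rule dvdI[OF trans[OF _ mult.commute]])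
qed

lemma (in group) main_local:
  assumes fin: "finite (carrier G)" and H: "subgroup H G"
    and hyp: "\<And>p P. sylow_subgroup G p P \<Longrightarrow> card (H <#> P) dvd order G"
    and K: "subgroup K G"
  shows "card (H <#> K) dvd order G"
proof -
  have pos: "0 < card S" if "subgroup S G" for S
    using subgroup.finite_imp_card_positive[OF that fin] .
  have HK: "subgroup (H \<inter> K) G" using subgroups_Inter_pair[OF H K] .
  have e1: "card (H <#> K) * card (H \<inter> K) = card H * card K" using card_set_mult_sub[OF H K fin] .
  have "card H * card K \<noteq> 0" using pos[OF H] pos[OF K] by simp
  then have cHK0: "card (H <#> K) \<noteq> 0" using e1 by (metis mult_zero_left)
  have o0: "order G \<noteq> 0" using pos[OF subgroup_self] unfolding order_def by simp
  show ?thesis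
  proof (rule multiplicity_le_imp_dvd[OF cHK0])
    fix p :: nat assume p: "Factorial_Ring.prime p"
    have pe: "prime_elem p" using p by simp
    have p1: "1 < p" using p prime_gt_1_nat by blast
    define v where "v x = multiplicity p x" for x :: nat
    define a where "a = v (order G)"
    define KG where "KG = G\<lparr>carrier := K\<rparr>"
    have gKG: "group KG" unfolding KG_def using subgroup_imp_group[OF K] .
    have finK: "finite (carrier KG)" unfolding KG_def using fin K subgroup.subset finite_subset by fastforce
    have triv: "subgroup {\<one>\<^bsub>KG\<^esub>} KG" using group.triv_subgroup[OF gKG] .
    obtain R where R: "subgroup R KG" "card R = p ^ v (order KG)"
      using group.sylow_extend[OF gKG finK p triv, of 0] unfolding v_def by auto
    have RG: "subgroup R G" using incl_subgroup[OF K] R(1) unfolding KG_def by blast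
    have RK: "R \<subseteq> K" using subgroup.subset[OF R(1)] unfolding KG_def by simp
    have cR: "card R = p ^ v (card K)" using R(2) unfolding KG_def order_def by simp
    obtain P where P: "subgroup P G" "card P = p ^ a" "R \<subseteq> P"
      using sylow_extend[OF fin p RG cR] unfolding a_def v_def by blast
    have "sylow_subgroup G p P" unfolding sylow_subgroup_def using p P unfolding a_def v_def by simp
    then have dHP: "card (H <#> P) dvd order G" by (rule hyp)
    define A where "A = H \<inter> P"
    have AG: "subgroup A G" unfolding A_def using subgroups_Inter_pair[OF H P(1)] .
    have e2: "card (H <#> P) * card A = card H * card P" unfolding A_def using card_set_mult_sub[OF H P(1) fin] .
    have "card H * card P \<noteq> 0" using pos[OF H] pos[OF P(1)] by simp
    then have cHP0: "card (H <#> P) \<noteq> 0" using e2 by (metis mult_zero_left)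
    have vmul: "v (x * y) = v x + v y" if "x \<noteq> 0" "y \<noteq> 0" for x y
      unfolding v_def using prime_elem_multiplicity_mult_distrib[OF pe that] .
    have vpow: "v (p ^ n) = n" for n unfolding v_def using multiplicity_prime_power[OF pe] .
    have "v (card (H <#> P)) \<le> a" unfolding a_def v_def using dHP o0 by (rule dvd_imp_multiplicity_le)
    moreover have "v (card (H <#> P)) + v (card A) = v (card H) + a"
      using arg_cong[OF e2, of v] vmul cHP0 pos[OF AG] pos[OF H] pos[OF P(1)] P(2) vpow by simp
    ultimately have vA: "v (card H) \<le> v (card A)" by simp
    have cA: "p ^ v (card H) \<le> card A"
    proof -
      have "p ^ v (card H) \<le> p ^ v (card A)" using vA p1 by (simp add: power_increasing)
      also have "\<dots> \<le> card A" unfolding v_def using pos[OF AG] by (intro dvd_imp_le multiplicity_dvd) auto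
      finally show ?thesis .
    qed
    have e3: "card (A <#> R) * card (A \<inter> R) = card A * card R" using card_set_mult_sub[OF AG RG fin] .
    have "A <#> R \<subseteq> P"
    proof
      fix x assume "x \<in> A <#> R"
      then obtain y z where "y \<in> A" "z \<in> R" "x = y \<otimes> z" unfolding set_mult_def by auto
      then show "x \<in> P" using P(3) subgroup.m_closed[OF P(1)] unfolding A_def by blast
    qed
    moreover have "finite P" using fin subgroup.subset[OF P(1)] finite_subset by blast
    ultimately have cAR: "card (A <#> R) \<le> p ^ a" using P(2) card_mono by fastforce
    have AR: "A \<inter> R = H \<inter> R" unfolding A_def using P(3) by auto
    define c where "c = v (card (H \<inter> K))"
    have HRG: "subgroup (H \<inter> R) G" using subgroups_Inter_pair[OF H RG] .
    have "card (H \<inter> R) dvd p ^ v (card K)" unfolding cR[symmetric]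
      by (rule card_sub_dvd[OF HRG RG]) auto
    then obtain j where j: "card (H \<inter> R) = p ^ j" using divides_primepow_nat[OF p] by auto
    have "card (H \<inter> R) dvd card (H \<inter> K)" by (rule card_sub_dvd[OF HRG HK]) (use RK in auto)
    then have "j \<le> c" unfolding c_def v_def using j pos[OF HK] p
      by (intro multiplicity_geI) auto
    then have cHR: "card (H \<inter> R) \<le> p ^ c" using j p1 by (simp add: power_increasing)
    have "p ^ (v (card H) + v (card K)) = p ^ v (card H) * card R" using cR by (simp add: power_add)
    also have "\<dots> \<le> card A * card R" using cA by simp
    also have "\<dots> = card (A <#> R) * card (H \<inter> R)" using e3 AR by simp
    also have "\<dots> \<le> p ^ a * p ^ c" using cAR cHR by (intro mult_le_mono) auto
    also have "\<dots> = p ^ (a + c)" by (simp add: power_add)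
    finally have "v (card H) + v (card K) \<le> a + c" by (rule power_le_imp_le_exp[OF p1])
    moreover have "v (card (H <#> K)) + c = v (card H) + v (card K)"
      unfolding c_def using arg_cong[OF e1, of v] vmul cHK0 pos[OF HK] pos[OF H] pos[OF K] by simp
    ultimately show "multiplicity p (card (H <#> K)) \<le> multiplicity p (order G)"
      unfolding v_def a_def by simp
  qed
qed

theorem mainTheorem10:
  fixes G :: "('a, 'b) monoid_scheme" and H :: "'a set"
  assumes "group G" and "finite (carrier G)" and "subgroup H G"
    and "\<And>p P. sylow_subgroup G p P \<Longrightarrow> card (H <#>\<^bsub>G\<^esub> P) dvd order G"
  shows "\<And>K. subgroup K G \<Longrightarrow> card (H <#>\<^bsub>G\<^esub> K) dvd order G"
proof -
  fix K assume K: "subgroup K G"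
  show "card (H <#>\<^bsub>G\<^esub> K) dvd order G"
    by (rule group.main_local[OF assms(1,2,3) _ K]) (rule assms(4))
qed

end
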